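(* Let $p\in(0,1)$, $x>2$, and let $(\xi_n)_{n\geq1}$ be i.i.d. with $\mathbf{P}(\xi_1=1)=p=1-\mathbf{P}(\xi_1=-1)$. Set $W_0:=x$, $B_1:=1$, $W_n:=W_{n-1}+\xi_nB_n$, $B_{n+1}:=B_n2^{\xi_n}$ for $n\geq1$, $f(x,p):=\mathbf{P}(W_n\leq0\text{ for some }n)$, $S_0:=0$, $S_n:=\sum_{i=1}^n\xi_i$, and $$S:=\sum_{n=1}^\infty\mathbf{1}_{\{\xi_n=1\}}2^{S_{n-1}}\in[0,\infty].$$ Then $f(x,p)=\mathbf{P}(S>x-2)$. *)

theory Defs
  imports "HOL-Probability.Probability"
begin

text \<open>Bet sizes: bet xi w (Suc n) is B_(n+1); B_1 = 1, B_(n+1) = B_n * 2 ^ xi_n.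
  The value at index 0 is unused.\<close>
fun bet :: "(nat \<Rightarrow> 'a \<Rightarrow> real) \<Rightarrow> 'a \<Rightarrow> nat \<Rightarrow> real" where
  "bet xi w 0 = 1"
| "bet xi w (Suc 0) = 1"
| "bet xi w (Suc (Suc n)) = bet xi w (Suc n) * 2 powr (xi (Suc n) w)"

fun wealth :: "real \<Rightarrow> (nat \<Rightarrow> 'a \<Rightarrow> real) \<Rightarrow> 'a \<Rightarrow> nat \<Rightarrow> real" where
  "wealth x xi w 0 = x"
| "wealth x xi w (Suc n) = wealth x xi w n + xi (Suc n) w * bet xi w (Suc n)"

definition psum :: "(nat \<Rightarrow> 'a \<Rightarrow> real) \<Rightarrow> 'a \<Rightarrow> nat \<Rightarrow> real" where
  "psum xi w n = (\<Sum>i\<in>{1..n}. xi i w)"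

definition Ssum :: "(nat \<Rightarrow> 'a \<Rightarrow> real) \<Rightarrow> 'a \<Rightarrow> ennreal" where
  "Ssum xi w = (\<Sum>m. ennreal (if xi (Suc m) w = 1 then 2 powr (psum xi w m) else 0))"

end

theory Submission
  imports Defs
begin

definition UU :: "(nat \<Rightarrow> 'a \<Rightarrow> real) \<Rightarrow> 'a \<Rightarrow> nat \<Rightarrow> real" where
  "UU xi w n = (\<Sum>i<n. if xi (Suc i) w = 1 then 2 powr (psum xi w i) else 0)"

lemma psum_0[simp]: "psum xi w 0 = 0"
  by (simp add: psum_def)

lemma psum_Suc[simp]: "psum xi w (Suc n) = psum xi w n + xi (Suc n) w"
  by (simp add: psum_def add.commute)

lemma bet_eq: "bet xi w (Suc n) = 2 powr (psum xi w n)"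
  by (induction n) (auto simp: powr_add)

lemma UU_Suc: "UU xi w (Suc n) = UU xi w n + (if xi (Suc n) w = 1 then 2 powr (psum xi w n) else 0)"
  by (simp add: UU_def)

lemma UU_mono: "m \<le> n \<Longrightarrow> UU xi w m \<le> UU xi w n"
  unfolding UU_def by (rule sum_mono2) auto

lemma wealth_eq:
  assumes "\<And>i. i \<ge> 1 \<Longrightarrow> xi i w = 1 \<or> xi i w = -1"
  shows "wealth x xi w n = x - 2 - UU xi w n + 2 * 2 powr (psum xi w n)"
proof (induction n)
  case 0
  then show ?case by (simp add: UU_def)
next
  case (Suc n)
  have "xi (Suc n) w = 1 \<or> xi (Suc n) w = -1" using assms by simp
  then show ?case
    using Suc by (auto simp: UU_Suc bet_eq powr_add powr_minus)
qed

lemma Ssum_eq: "Ssum xi w = (SUP n. ennreal (UU xi w n))"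
  unfolding Ssum_def UU_def
  by (simp add: suminf_eq_SUP sum_ennreal)

lemma pathwise:
  assumes pm: "\<And>i. i \<ge> 1 \<Longrightarrow> xi i w = 1 \<or> xi i w = -1"
    and pat: "\<And>N. \<exists>k\<ge>N. xi (4*k+1) w = 1 \<and> xi (4*k+2) w = -1 \<and> xi (4*k+3) w = -1 \<and> xi (4*k+4) w = -1"
    and x: "x > 2"
  shows "(\<exists>n. wealth x xi w n \<le> 0) \<longleftrightarrow> ennreal (x - 2) < Ssum xi w"
proof
  assume "\<exists>n. wealth x xi w n \<le> 0"
  then obtain n where n: "wealth x xi w n \<le> 0" by blast
  have "x - 2 < UU xi w n"
  proof -
    have "0 < 2 * 2 powr psum xi w n" by simp
    then show ?thesis using n wealth_eq[where xi=xi and w=w, OF pm, of x n] by linarith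
  qed
  then have "ennreal (x - 2) < ennreal (UU xi w n)"
    using x by (simp add: ennreal_less_iff)
  also have "\<dots> \<le> Ssum xi w" unfolding Ssum_eq by (rule SUP_upper) auto
  finally show "ennreal (x - 2) < Ssum xi w" .
next
  assume "ennreal (x - 2) < Ssum xi w"
  then obtain N where "ennreal (x - 2) < ennreal (UU xi w N)"
    unfolding Ssum_eq by (auto simp: less_SUP_iff)
  then have N: "x - 2 < UU xi w N"
    using x by (subst (asm) ennreal_less_iff) auto
  obtain k where k: "k \<ge> N" and p1: "xi (4*k+1) w = 1" and p2: "xi (4*k+2) w = -1"
     and p3: "xi (4*k+3) w = -1" and p4: "xi (4*k+4) w = -1"
    using pat by blast
  define n where "n = 4 * k"
  have "UU xi w N \<le> UU xi w n" using k n_def by (intro UU_mono) auto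
  have q1: "xi (Suc n) w = 1"
  proof -
    have e: "4*k+1 = Suc n" by (simp add: n_def)
    show ?thesis using p1 unfolding e .
  qed
  have q2: "xi (Suc (Suc n)) w = -1"
  proof -
    have e: "4*k+2 = Suc (Suc n)" by (simp add: n_def)
    show ?thesis using p2 unfolding e .
  qed
  have q3: "xi (Suc (Suc (Suc n))) w = -1"
  proof -
    have e: "4*k+3 = Suc (Suc (Suc n))" by (simp add: n_def)
    show ?thesis using p3 unfolding e .
  qed
  have q4: "xi (Suc (Suc (Suc (Suc n)))) w = -1"
  proof -
    have e: "4*k+4 = Suc (Suc (Suc (Suc n)))" by (simp add: n_def)
    show ?thesis using p4 unfolding e .
  qed
  have s4: "n + 4 = Suc (Suc (Suc (Suc n)))" by simp
  have U: "UU xi w (n+4) = UU xi w n + 2 powr psum xi w n"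
    unfolding s4 using q1 q2 q3 q4 by (simp add: UU_Suc)
  have P: "psum xi w (n+4) = psum xi w n - 2"
    unfolding s4 using q1 q2 q3 q4 by simp
  have Pw: "2 * 2 powr (psum xi w n - 2) = 2 powr psum xi w n / 2"
    by (simp add: powr_diff)
  have W: "wealth x xi w (n+4) = x - 2 - UU xi w (n+4) + 2 * 2 powr psum xi w (n+4)"
    by (rule wealth_eq[where xi=xi and w=w, OF pm])
  have "wealth x xi w (n+4) = x - 2 - UU xi w n - 2 powr psum xi w n / 2"
    unfolding W U P Pw by linarith
  moreover have "0 < 2 powr psum xi w n / 2" by simp
  ultimately have "wealth x xi w (n+4) \<le> 0"
    using N \<open>UU xi w N \<le> UU xi w n\<close> by linarith
  then show "\<exists>n. wealth x xi w n \<le> 0" by blast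
qed

lemma (in prob_space) pm_AE:
  fixes xi :: "nat \<Rightarrow> 'a \<Rightarrow> real" and p :: real
  assumes rv: "\<And>n. n \<ge> 1 \<Longrightarrow> random_variable borel (xi n)"
    and h1: "\<And>n. n \<ge> 1 \<Longrightarrow> prob {w \<in> space M. xi n w = 1} = p"
    and h2: "\<And>n. n \<ge> 1 \<Longrightarrow> prob {w \<in> space M. xi n w = -1} = 1 - p"
  shows "AE w in M. \<forall>i. i \<ge> 1 \<longrightarrow> xi i w = 1 \<or> xi i w = -1"
proof -
  have "AE w in M. i \<ge> 1 \<longrightarrow> xi i w = 1 \<or> xi i w = -1" for i
  proof (cases "i \<ge> 1")
    case True
    have [measurable]: "xi i \<in> borel_measurable M" using rv True by simp
    have "prob ({w \<in> space M. xi i w = 1} \<union> {w \<in> space M. xi i w = -1})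
        = prob {w \<in> space M. xi i w = 1} + prob {w \<in> space M. xi i w = -1}"
      by (rule finite_measure_Union) auto
    also have "\<dots> = 1" using h1[OF True] h2[OF True] by simp
    finally have "AE w in M. w \<in> {w \<in> space M. xi i w = 1} \<union> {w \<in> space M. xi i w = -1}"
      by (subst prob_eq_1[symmetric]) auto
    then show ?thesis by eventually_elim auto
  qed simp
  then show ?thesis by (simp add: AE_all_countable)
qed

lemma (in prob_space) pattern_AE:
  fixes xi :: "nat \<Rightarrow> 'a \<Rightarrow> real" and p :: real
  assumes ind: "indep_vars (\<lambda>_. borel) xi {1..}"
    and p: "0 < p" "p < 1"
    and h1: "\<And>n. n \<ge> 1 \<Longrightarrow> prob {w \<in> space M. xi n w = 1} = p"
    and h2: "\<And>n. n \<ge> 1 \<Longrightarrow> prob {w \<in> space M. xi n w = -1} = 1 - p"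
  shows "AE w in M. \<forall>N. \<exists>k\<ge>N. xi (4*k+1) w = 1 \<and> xi (4*k+2) w = -1 \<and> xi (4*k+3) w = -1 \<and> xi (4*k+4) w = -1"
proof -
  define v where "v i = (if i mod 4 = 1 then 1 else -1::real)" for i :: nat
  define c where "c i = (if i mod 4 = 1 then p else 1-p)" for i :: nat
  define F where "F i = {w\<in>space M. xi i w = v i}" for i
  define B where "B k = {4*k+1..4*k+4}" for k :: nat
  define E where "E k = {w\<in>space M. \<forall>i\<in>B k. xi i w = v i}" for k
  have indF: "indep_events F {1..}"
    unfolding F_def by (rule indep_eventsI_indep_vars[OF ind]) simp
  have Fev: "F i \<in> events" if "i \<ge> 1" for i using indF that by (auto simp: indep_events_def)
  have probF: "prob (F i) = c i" if "i \<ge> 1" for i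
    using h1[OF that] h2[OF that] by (simp add: F_def v_def c_def)
  have B1: "B k \<subseteq> {1..}" "B k \<noteq> {}" "finite (B k)" "card (B k) = 4" for k
    by (auto simp: B_def)
  have EF: "E k = (\<Inter>i\<in>B k. F i)" for k
    using B1(2)[of k] by (auto simp: E_def F_def)
  have Eev: "E k \<in> events" for k
    unfolding EF using B1[of k] Fev by (intro sets.finite_INT) auto
  have probInt: "prob (\<Inter>i\<in>I. F i) = (\<Prod>i\<in>I. c i)" if "I \<subseteq> {1..}" "finite I" "I \<noteq> {}" for I
  proof -
    have "prob (\<Inter>i\<in>I. F i) = (\<Prod>i\<in>I. prob (F i))"
      using indF that by (auto simp: indep_events_def)
    also have "\<dots> = (\<Prod>i\<in>I. c i)"
      using that by (intro prod.cong) (auto simp: probF)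
    finally show ?thesis .
  qed
  have disj: "B k \<inter> B l = {}" if "k \<noteq> l" for k l
  proof -
    { fix i assume "i \<in> B k" "i \<in> B l"
      then have "4*k+1 \<le> i" "i \<le> 4*k+4" "4*l+1 \<le> i" "i \<le> 4*l+4" by (auto simp: B_def)
      then have "k = l" by presburger }
    then show ?thesis using that by blast
  qed
  have probE: "prob (E k) = (\<Prod>i\<in>B k. c i)" for k
    unfolding EF using B1[of k] by (intro probInt) auto
  have indE: "indep_events E UNIV"
  proof (rule indep_eventsI)
    fix J :: "nat set" assume J: "finite J" "J \<noteq> {}"
    have eq: "(\<Inter>k\<in>J. E k) = (\<Inter>i\<in>\<Union>(B`J). F i)" unfolding EF by auto
    have "prob (\<Inter>k\<in>J. E k) = (\<Prod>i\<in>\<Union>(B`J). c i)"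
      unfolding eq by (rule probInt) (use J B1 in auto)
    also have "\<dots> = (\<Prod>k\<in>J. \<Prod>i\<in>B k. c i)"
      using J B1 disj by (intro prod.UNION_disjoint) auto
    also have "\<dots> = (\<Prod>k\<in>J. prob (E k))" by (simp add: probE)
    finally show "prob (\<Inter>k\<in>J. E k) = (\<Prod>k\<in>J. prob (E k))" .
  qed (rule Eev)
  define m where "m = min p (1-p)"
  have m0: "0 < m" using p by (simp add: m_def)
  have Elow: "m ^ 4 \<le> prob (E k)" for k
  proof -
    have "m ^ 4 = (\<Prod>i\<in>B k. m)" using B1(4)[of k] by simp
    also have "\<dots> \<le> (\<Prod>i\<in>B k. c i)"
      using m0 by (intro prod_mono) (auto simp: m_def c_def)
    finally show ?thesis by (simp add: probE)
  qed
  define A where "A n = (\<Union>k\<in>{n..}. E k)" for n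
  have Aev: "range A \<subseteq> events" unfolding A_def using Eev by (auto intro!: sets.countable_UN')
  have Adec: "decseq A" unfolding A_def decseq_def by (auto 0 3 intro: order_trans)
  have lim: "(\<lambda>n. prob (A n)) \<longlonglongrightarrow> prob (\<Inter>n. A n)"
    by (rule finite_Lim_measure_decseq[OF Aev Adec])
  have "m ^ 4 \<le> prob (\<Inter>n. A n)"
  proof (rule LIMSEQ_le_const[OF lim], intro exI allI impI)
    fix n
    have "prob (E n) \<le> prob (A n)"
      using Aev by (intro finite_measure_mono) (auto simp: A_def)
    then show "m ^ 4 \<le> prob (A n)" using Elow[of n] by linarith
  qed
  then have "prob (\<Inter>n. A n) \<noteq> 0" using m0 by (metis not_le zero_less_power)
  then have "prob (\<Inter>n. A n) = 1" using borel_0_1_law[OF indE] by (simp add: A_def)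
  then have "AE w in M. w \<in> (\<Inter>n. A n)"
    using Aev by (subst prob_eq_1[symmetric]) auto
  then show ?thesis
  proof (eventually_elim)
    case (elim w)
    show ?case
    proof
      fix N
      from elim obtain k where k: "k \<ge> N" "w \<in> E k" by (auto simp: A_def)
      have v1: "v (4*k+1) = 1" "v (4*k+2) = -1" "v (4*k+3) = -1" "v (4*k+4) = -1"
      proof -
        have "(4*k+1) mod 4 = 1" by presburger
        moreover have "(4*k+2) mod 4 \<noteq> 1" by presburger
        moreover have "(4*k+3) mod 4 \<noteq> 1" by presburger
        moreover have "(4*k+4) mod 4 \<noteq> 1" by presburger
        ultimately show "v (4*k+1) = 1" "v (4*k+2) = -1" "v (4*k+3) = -1" "v (4*k+4) = -1"
          unfolding v_def by simp_all
      qed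
      have "4*k+1 \<in> B k" "4*k+2 \<in> B k" "4*k+3 \<in> B k" "4*k+4 \<in> B k" by (auto simp: B_def)
      then show "\<exists>k\<ge>N. xi (4*k+1) w = 1 \<and> xi (4*k+2) w = -1 \<and> xi (4*k+3) w = -1 \<and> xi (4*k+4) w = -1"
        using k v1 unfolding E_def by (intro exI[of _ k]) auto
    qed
  qed
qed

theorem lemma2p2:
  fixes M :: "'a measure" and xi :: "nat \<Rightarrow> 'a \<Rightarrow> real" and p x :: real
  assumes "prob_space M"
    and "0 < p" and "p < 1" and "x > 2"
    and "prob_space.indep_vars M (\<lambda>_. borel) xi {1..}"
    and "\<And>n. n \<ge> 1 \<Longrightarrow> measure M {w \<in> space M. xi n w = 1} = p"
    and "\<And>n. n \<ge> 1 \<Longrightarrow> measure M {w \<in> space M. xi n w = -1} = 1 - p"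
  shows "measure M {w \<in> space M. \<exists>n. wealth x xi w n \<le> 0}
         = measure M {w \<in> space M. ennreal (x - 2) < Ssum xi w}"
proof -
  interpret prob_space M by fact
  have rv: "\<And>n. n \<ge> 1 \<Longrightarrow> random_variable borel (xi n)"
    using assms(5) by (simp add: indep_vars_def)
  have rvS[measurable]: "xi (Suc n) \<in> borel_measurable M" for n using rv[of "Suc n"] by simp
  have ps[measurable]: "(\<lambda>w. psum xi w n) \<in> borel_measurable M" for n
    unfolding psum_def by (rule borel_measurable_sum) (use rv in auto)
  have wm[measurable]: "(\<lambda>w. wealth x xi w n) \<in> borel_measurable M" for n
  proof (induction n)
    case 0
    then show ?case by simp
  next
    case (Suc n)
    note [measurable] = Suc.IH
    show ?case unfolding wealth.simps bet_eq by measurable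
  qed
  have Sm[measurable]: "(\<lambda>w. Ssum xi w) \<in> borel_measurable M" unfolding Ssum_def by measurable
  have setA: "{w\<in>space M. \<exists>n. wealth x xi w n \<le> 0} \<in> sets M" by measurable
  have setB: "{w\<in>space M. ennreal (x-2) < Ssum xi w} \<in> sets M" by measurable
  have AE1: "AE w in M. \<forall>i. i \<ge> 1 \<longrightarrow> xi i w = 1 \<or> xi i w = -1"
    by (rule pm_AE[OF rv assms(6,7)])
  have AE2: "AE w in M. \<forall>N. \<exists>k\<ge>N. xi (4*k+1) w = 1 \<and> xi (4*k+2) w = -1 \<and> xi (4*k+3) w = -1 \<and> xi (4*k+4) w = -1"
    by (rule pattern_AE[OF assms(5) assms(2,3) assms(6,7)])
  have "AE w in M. w \<in> {w\<in>space M. \<exists>n. wealth x xi w n \<le> 0} \<longleftrightarrow> w \<in> {w\<in>space M. ennreal (x-2) < Ssum xi w}"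
    using AE1 AE2
  proof (eventually_elim)
    case (elim w)
    then show ?case using pathwise[where xi=xi and w=w and x=x, OF _ _ assms(4)] by auto
  qed
  then show ?thesis by (rule measure_eq_AE[OF _ setA setB])
qed

end
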